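(* Let $s,x,y,t\in\mathbb{C}$ with $sy+xt+1=x^2+y^2$. Let $F$ be a symmetric signature of arity $r+1$ and $G$ a symmetric signature of arity $w+1$ on $\{R,G,B\}$ ($r,w\ge0$), both generalized Fibonacci gates with parameters $s,x,y,t$. Define $H:\{R,G,B\}^{r+w}\to\mathbb{C}$ by $H(y_1,\dots,y_{r+w})=\sum_{z\in\{R,G,B\}}F(y_1,\dots,y_r,z)\,G(y_{r+1},\dots,y_{r+w},z)$. Then $H$ is symmetric and is a generalized Fibonacci gate with parameters $s,x,y,t$.
   Context: A signature of arity $n$ on $\{R,G,B\}$ is a function $\{R,G,B\}^n\to\mathbb{C}$; symmetric means invariant under permutations of its variables, and then $g_{i,j,k}$ denotes its value on inputs with $i$ entries $R$, $j$ entries $G$, $k$ entries $B$. A symmetric signature $g$ of arity $n\ge2$ is a generalized Fibonacci gate with parameters $s,x,y,t$ (where $sy+xt+1=x^2+y^2$) if for all $i,j,k\ge0$ with $i+j+k=n$, $i\ge2$: $g_{i-2,j+2,k}=g_{i,j,k}+s\,g_{i-1,j+1,k}+x\,g_{i-1,j,k+1}$, $g_{i-2,j+1,k+1}=x\,g_{i-1,j+1,k}+y\,g_{i-1,j,k+1}$, $g_{i-2,j,k+2}=g_{i,j,k}+y\,g_{i-1,j+1,k}+t\,g_{i-1,j,k+1}$. Signatures of arity $\le1$ are considered generalized Fibonacci gates for any parameters. *)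

theory Defs
  imports Complex_Main "HOL-Library.Multiset"
begin

datatype color = R | G | B

text \<open>A signature of arity n on {R,G,B} is a function on lists of colours of length n;
  only its values on lists of length n are relevant.\<close>
type_synonym signature = "color list \<Rightarrow> complex"

definition symmetric_sig :: "nat \<Rightarrow> signature \<Rightarrow> bool" where
  "symmetric_sig n g \<longleftrightarrow>
     (\<forall>xs ys. length xs = n \<longrightarrow> mset xs = mset ys \<longrightarrow> g xs = g ys)"

definition gval :: "signature \<Rightarrow> nat \<Rightarrow> nat \<Rightarrow> nat \<Rightarrow> complex" where
  "gval g i j k = g (replicate i R @ replicate j G @ replicate k B)"

definition gen_fib_gate ::
  "nat \<Rightarrow> complex \<Rightarrow> complex \<Rightarrow> complex \<Rightarrow> complex \<Rightarrow> signature \<Rightarrow> bool" where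
  "gen_fib_gate n s x y t g \<longleftrightarrow>
     (n \<ge> 2 \<longrightarrow>
       (\<forall>i j k. i + j + k = n \<longrightarrow> i \<ge> 2 \<longrightarrow>
          gval g (i-2) (j+2) k = gval g i j k + s * gval g (i-1) (j+1) k + x * gval g (i-1) j (k+1)
        \<and> gval g (i-2) (j+1) (k+1) = x * gval g (i-1) (j+1) k + y * gval g (i-1) j (k+1)
        \<and> gval g (i-2) j (k+2) = gval g i j k + y * gval g (i-1) (j+1) k + t * gval g (i-1) j (k+1)))"

definition contract :: "nat \<Rightarrow> signature \<Rightarrow> signature \<Rightarrow> signature" where
  "contract r F Gs = (\<lambda>ys. \<Sum>z\<in>{R, G, B}. F (take r ys @ [z]) * Gs (drop r ys @ [z]))"

end

theory Submission
  imports Defs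
begin
definition PP :: "complex \<Rightarrow> complex \<Rightarrow> complex \<Rightarrow> complex \<Rightarrow> (color \<Rightarrow> color \<Rightarrow> complex) \<Rightarrow> bool" where
  "PP s x y t m \<longleftrightarrow> m G G = m R R + s * m R G + x * m R B
     \<and> m G B = x * m R G + y * m R B \<and> m B B = m R R + y * m R G + t * m R B"

lemma sum3: "(\<Sum>z\<in>{R,G,B}. f z) = f R + f G + (f B :: complex)"
  by simp

lemma diffeq: "E1 - E2 = c * (s*y+x*t+1-x^2-y^2) \<Longrightarrow> s*y+x*t+1 = x^2+y^2 \<Longrightarrow> E1 = (E2::complex)"
  by simp

lemma L1:
  assumes h: "s*y+x*t+1 = x^2+y^2" and pm: "PP s x y t m" and pn: "PP s x y t n"
    and sm: "\<And>a b. m a b = m b a" and sn: "\<And>a b. n a b = n b a"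
  shows "(\<Sum>z\<in>{R,G,B}. m a z * n b z) = (\<Sum>z\<in>{R,G,B}. m b z * n a z)"
proof -
  have e: "m G R = m R G" "m B R = m R B" "m B G = m G B"
          "n G R = n R G" "n B R = n R B" "n B G = n G B" using sm sn by metis+
  note p = pm[unfolded PP_def] pn[unfolded PP_def]
  show ?thesis
    apply (unfold sum3)
    apply (cases a; cases b)
            apply (simp_all only: e p)
            apply (simp_all add: algebra_simps)
     apply (rule diffeq[OF _ h, where c = "m R G * n R B - m R B * n R G"], simp add: algebra_simps power2_eq_square)
    apply (rule diffeq[OF _ h, where c = "m R B * n R G - m R G * n R B"], simp add: algebra_simps power2_eq_square)
    done
qed

lemma L2:
  assumes h: "s*y+x*t+1 = x^2+y^2" and pm: "PP s x y t m" and pn: "PP s x y t n"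
    and sm: "\<And>a b. m a b = m b a" and sn: "\<And>a b. n a b = n b a"
  shows "PP s x y t (\<lambda>a b. \<Sum>z\<in>{R,G,B}. m a z * n b z)"
proof -
  have e: "m G R = m R G" "m B R = m R B" "m B G = m G B"
          "n G R = n R G" "n B R = n R B" "n B G = n G B" using sm sn by metis+
  note p = pm[unfolded PP_def] pn[unfolded PP_def]
  show ?thesis
    unfolding PP_def sum3
    apply (simp only: e p)
    apply (intro conjI)
      apply (rule diffeq[OF _ h, where c = "- m R B * n R B"], simp add: algebra_simps power2_eq_square)
     apply (rule diffeq[OF _ h, where c = "m R G * n R B"], simp add: algebra_simps power2_eq_square)
    apply (rule diffeq[OF _ h, where c = "- m R G * n R G"], simp add: algebra_simps power2_eq_square)
    done
qed

lemma L3: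
  assumes "\<And>z. PP s x y t (M z)"
  shows "PP s x y t (\<lambda>a b. \<Sum>z\<in>{R,G,B}. c z * M z a b)"
  using assms[of R] assms[of G] assms[of B] unfolding PP_def sum3
  by (simp add: algebra_simps)

lemma sym_eq: "symmetric_sig n g \<Longrightarrow> length xs = n \<Longrightarrow> mset xs = mset ys \<Longrightarrow> g xs = g ys"
  unfolding symmetric_sig_def by blast

lemma mset_decomp: "mset xs = replicate_mset (count (mset xs) R) R
   + replicate_mset (count (mset xs) G) G + replicate_mset (count (mset xs) B) B"
  by (rule multiset_eqI) (case_tac x; simp)

lemma fib_slice:
  assumes sg: "symmetric_sig n g" and fg: "gen_fib_gate n s x y t g" and l: "length rest + 2 = n"
  shows "PP s x y t (\<lambda>a b. g (rest @ [a, b]))"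
proof -
  define i where "i = count (mset rest) R"
  define j where "j = count (mset rest) G"
  define k where "k = count (mset rest) B"
  have ms: "mset rest = replicate_mset i R + replicate_mset j G + replicate_mset k B"
    unfolding i_def j_def k_def by (rule mset_decomp)
  have len: "length rest = i + j + k"
    using arg_cong[OF ms, of size] by simp
  have n: "(i + 2) + j + k = n" "2 \<le> i + 2" "n \<ge> 2" using len l by auto
  have F: "gval g i (j+2) k = gval g (i+2) j k + s * gval g (i+1) (j+1) k + x * gval g (i+1) j (k+1)
        \<and> gval g i (j+1) (k+1) = x * gval g (i+1) (j+1) k + y * gval g (i+1) j (k+1)
        \<and> gval g i j (k+2) = gval g (i+2) j k + y * gval g (i+1) (j+1) k + t * gval g (i+1) j (k+1)"
    using fg n unfolding gen_fib_gate_def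
    apply -
    apply (drule mp, assumption)
    apply (drule spec[of _ "i+2"], drule spec[of _ j], drule spec[of _ k])
    by simp
  have g1: "g (rest @ [a, b]) = gval g i' j' k'"
    if "mset (rest @ [a,b]) = replicate_mset i' R + replicate_mset j' G + replicate_mset k' B" for a b i' j' k'
    unfolding gval_def using sym_eq[OF sg, of "rest @ [a,b]"] that l by simp
  have "g (rest @ [G, G]) = gval g i (j+2) k" by (rule g1) (simp add: ms)
  moreover have "g (rest @ [R, R]) = gval g (i+2) j k" by (rule g1) (simp add: ms)
  moreover have "g (rest @ [R, G]) = gval g (i+1) (j+1) k" by (rule g1) (simp add: ms)
  moreover have "g (rest @ [R, B]) = gval g (i+1) j (k+1)" by (rule g1) (simp add: ms)
  moreover have "g (rest @ [G, B]) = gval g i (j+1) (k+1)" by (rule g1) (simp add: ms)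
  moreover have "g (rest @ [B, B]) = gval g i j (k+2)" by (rule g1) (simp add: ms)
  ultimately show ?thesis using F unfolding PP_def by simp
qed

lemma slice_fib:
  assumes sg: "symmetric_sig n g"
    and P: "\<And>rest. length rest + 2 = n \<Longrightarrow> PP s x y t (\<lambda>a b. g (rest @ [a, b]))"
  shows "gen_fib_gate n s x y t g"
  unfolding gen_fib_gate_def
proof (intro impI allI)
  fix i j k assume "2 \<le> n" "i + j + k = n" "2 \<le> i"
  then obtain i' where i: "i = i' + 2" by (metis add.commute le_Suc_ex)
  define rest where "rest = replicate i' R @ replicate j G @ replicate k B"
  have l: "length rest + 2 = n" using \<open>i+j+k=n\<close> i by (simp add: rest_def)
  have g1: "g (rest @ [a, b]) = gval g i'' j' k'"
    if "mset (rest @ [a,b]) = replicate_mset i'' R + replicate_mset j' G + replicate_mset k' B" for a b i'' j' k'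
    unfolding gval_def using sym_eq[OF sg, of "rest @ [a,b]"] that l by simp
  have "g (rest @ [G, G]) = gval g i' (j+2) k" by (rule g1) (simp add: rest_def)
  moreover have "g (rest @ [R, R]) = gval g (i'+2) j k" by (rule g1) (simp add: rest_def)
  moreover have "g (rest @ [R, G]) = gval g (i'+1) (j+1) k" by (rule g1) (simp add: rest_def)
  moreover have "g (rest @ [R, B]) = gval g (i'+1) j (k+1)" by (rule g1) (simp add: rest_def)
  moreover have "g (rest @ [G, B]) = gval g i' (j+1) (k+1)" by (rule g1) (simp add: rest_def)
  moreover have "g (rest @ [B, B]) = gval g i' j (k+2)" by (rule g1) (simp add: rest_def)
  ultimately show "gval g (i - 2) (j + 2) k = gval g i j k + s * gval g (i - 1) (j + 1) k + x * gval g (i - 1) j (k + 1) \<and>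
         gval g (i - 2) (j + 1) (k + 1) = x * gval g (i - 1) (j + 1) k + y * gval g (i - 1) j (k + 1) \<and>
         gval g (i - 2) j (k + 2) = gval g i j k + y * gval g (i - 1) (j + 1) k + t * gval g (i - 1) j (k + 1)"
    using P[OF l] unfolding PP_def i by simp
qed

lemma move:
  assumes sw: "\<And>p a b q. length p + length q + 2 = n \<Longrightarrow> g (p @ a # b # q) = g (p @ b # a # q)"
  shows "length p + length ys1 + length ys2 + 1 = n \<Longrightarrow> g (p @ a # ys1 @ ys2) = g (p @ ys1 @ a # ys2)"
proof (induction ys1 arbitrary: p)
  case Nil then show ?case by simp
next
  case (Cons c ys1)
  have "g (p @ a # c # ys1 @ ys2) = g (p @ c # a # ys1 @ ys2)"
    by (rule sw) (use Cons.prems in simp)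
  also have "\<dots> = g ((p @ [c]) @ a # ys1 @ ys2)" by simp
  also have "\<dots> = g ((p @ [c]) @ ys1 @ a # ys2)" by (rule Cons.IH) (use Cons.prems in simp)
  finally show ?case by simp
qed

lemma swap_sym:
  assumes sw: "\<And>p a b q. length p + length q + 2 = n \<Longrightarrow> g (p @ a # b # q) = g (p @ b # a # q)"
  shows "symmetric_sig n g"
proof -
  have "\<forall>(p::color list) ys. length p + length xs = n \<longrightarrow> mset xs = mset ys \<longrightarrow> g (p @ xs) = g (p @ ys)" for xs :: "color list"
  proof (induction xs)
    case Nil then show ?case by simp
  next
    case (Cons a xs)
    show ?case
    proof (intro allI impI)
      fix p ys :: "color list" assume l: "length p + length (a # xs) = n" and m: "mset (a # xs) = mset ys"
      have "a \<in># mset ys" by (simp flip: m)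
      hence "a \<in> set ys" by simp
      then obtain ys1 ys2 where ys: "ys = ys1 @ a # ys2" by (metis split_list)
      have m2: "mset xs = mset (ys1 @ ys2)" using m ys by simp
      have ll: "length xs = length ys1 + length ys2" using mset_eq_length[OF m2] by simp
      have "g (p @ a # xs) = g ((p @ [a]) @ xs)" by simp
      also have "\<dots> = g ((p @ [a]) @ (ys1 @ ys2))" using Cons.IH[rule_format, of "p @ [a]" "ys1 @ ys2"] l m2 by simp
      also have "\<dots> = g (p @ a # ys1 @ ys2)" by simp
      also have "\<dots> = g (p @ ys1 @ a # ys2)"
        by (rule move[where n=n and g=g, OF sw]) (insert l ll, auto)
      finally show "g (p @ a # xs) = g (p @ ys)" using ys by simp
    qed
  qed
  note X = this
  show ?thesis unfolding symmetric_sig_def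
  proof (intro allI impI)
    fix xs ys :: "color list" assume "length xs = n" "mset xs = mset ys"
    then show "g xs = g ys" using X[of xs, rule_format, of "[]" ys] by simp
  qed
qed


lemma symm2: "symmetric_sig n g \<Longrightarrow> length rest + 2 = n \<Longrightarrow> g (rest @ [a, b]) = g (rest @ [b, a])"
  by (rule sym_eq) auto

theorem mainTheorem5:
  fixes s x y t :: complex and r w :: nat and F Gs :: signature
  assumes "s * y + x * t + 1 = x^2 + y^2"
    and "symmetric_sig (r + 1) F" and "symmetric_sig (w + 1) Gs"
    and "gen_fib_gate (r + 1) s x y t F" and "gen_fib_gate (w + 1) s x y t Gs"
  shows "symmetric_sig (r + w) (contract r F Gs) \<and> gen_fib_gate (r + w) s x y t (contract r F Gs)"
proof -
  note h = assms(1) and sF = assms(2) and sG = assms(3) and fF = assms(4) and fG = assms(5)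
  have symH: "symmetric_sig (r + w) (contract r F Gs)"
  proof (rule swap_sym)
    fix p q :: "color list" and a b assume l: "length p + length q + 2 = r + w"
    consider (A) "length p + 2 \<le> r" | (Bc) "r \<le> length p" | (C) "length p + 1 = r" by linarith
    then show "contract r F Gs (p @ a # b # q) = contract r F Gs (p @ b # a # q)"
    proof cases
      case A
      then obtain k where k: "r = length p + 2 + k" using le_Suc_ex by blast
      have kq: "k \<le> length q" using l k by simp
      have t1: "take r (p @ u # v # q) = p @ u # v # take k q" for u v by (simp add: k)
      have d1: "drop r (p @ u # v # q) = drop k q" for u v by (simp add: k)
      show ?thesis unfolding contract_def t1 d1
        apply (rule sum.cong[OF refl], rule arg_cong2[where f="(*)"], rule sym_eq[OF sF])
        using kq k apply simp_all
        done
    next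
      case Bc
      then obtain k where k: "length p = r + k" using le_Suc_ex by blast
      have t1: "take r (p @ u # v # q) = take r p" for u v by (simp add: k)
      have d1: "drop r (p @ u # v # q) = drop r p @ u # v # q" for u v by (simp add: k)
      show ?thesis unfolding contract_def t1 d1
        apply (rule sum.cong[OF refl], rule arg_cong2[where f="(*)"], rule refl, rule sym_eq[OF sG])
        using l k apply simp_all
        done
    next
      case C
      have lq: "length q + 2 = w + 1" using l C by simp
      have e1: "contract r F Gs (p @ u # v # q) = (\<Sum>z\<in>{R,G,B}. F (p @ [u, z]) * Gs (q @ [v, z]))" for u v
      proof -
        have t1: "take r (p @ u # v # q) = p @ [u]" using C[symmetric] by simp
        have d1: "drop r (p @ u # v # q) = v # q" using C[symmetric] by simp
        show ?thesis unfolding contract_def t1 d1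
          apply (rule sum.cong[OF refl], rule arg_cong2[where f="(*)"], simp, rule sym_eq[OF sG])
          using lq apply simp_all
          done
      qed
      show ?thesis unfolding e1
        apply (rule L1[OF h, where m="\<lambda>u v. F (p @ [u, v])" and n="\<lambda>u v. Gs (q @ [u, v])"])
           apply (rule fib_slice[OF sF fF]) using C apply simp
          apply (rule fib_slice[OF sG fG lq])
         apply (rule symm2[OF sF]) using C apply simp
        apply (rule symm2[OF sG lq])
        done
    qed
  qed
  have fibH: "gen_fib_gate (r + w) s x y t (contract r F Gs)"
  proof (rule slice_fib[OF symH])
    fix rest :: "color list" assume l: "length rest + 2 = r + w"
    consider (W0) "w = 0" | (W1) "w = 1" | (W2) "w \<ge> 2" by linarith
    then show "PP s x y t (\<lambda>a b. contract r F Gs (rest @ [a, b]))"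
    proof cases
      case W0
      have r0: "r = length rest + 2" using W0 l by simp
      have e: "(\<lambda>a b. contract r F Gs (rest @ [a, b])) =
          (\<lambda>a b. \<Sum>z\<in>{R,G,B}. Gs [z] * F ((rest @ [z]) @ [a, b]))"
      proof -
        have t1: "take r (rest @ [a, b]) = rest @ [a, b]" for a b using r0 by simp
        have d1: "drop r (rest @ [a, b]) = []" for a b using r0 by simp
        show ?thesis unfolding contract_def t1 d1
          apply (intro ext sum.cong[OF refl])
          apply (subst mult.commute, rule arg_cong2[where f="(*)"], simp, rule sym_eq[OF sF])
          using r0 apply simp_all
          done
      qed
      show ?thesis unfolding e
        by (rule L3, rule fib_slice[OF sF fF]) (use W0 l in simp)
    next
      case W1
      have lr: "length rest + 2 = r + 1" using W1 l by simp
      have r1: "r = Suc (length rest)" using lr by simp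
      have e: "(\<lambda>a b. contract r F Gs (rest @ [a, b])) =
          (\<lambda>a b. \<Sum>z\<in>{R,G,B}. F (rest @ [a, z]) * Gs ([] @ [b, z]))"
        unfolding contract_def using lr by (intro ext) (simp add: r1)
      have lG: "length ([]::color list) + 2 = w + 1" using W1 by simp
      show ?thesis unfolding e
        apply (rule L2[OF h])
           apply (rule fib_slice[OF sF fF lr])
          apply (rule fib_slice[OF sG fG lG])
         apply (rule symm2[OF sF lr])
        apply (rule symm2[OF sG lG])
        done
    next
      case W2
      have lr: "r \<le> length rest" using W2 l by simp
      have lG: "length (drop r rest @ [z]) + 2 = w + 1" for z using W2 l by simp
      have e: "(\<lambda>a b. contract r F Gs (rest @ [a, b])) =
          (\<lambda>a b. \<Sum>z\<in>{R,G,B}. F (take r rest @ [z]) * Gs ((drop r rest @ [z]) @ [a, b]))"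
      proof -
        have t1: "take r (rest @ [a, b]) = take r rest" for a b using lr by simp
        have d1: "drop r (rest @ [a, b]) = drop r rest @ [a, b]" for a b using lr by simp
        show ?thesis unfolding contract_def t1 d1
          apply (intro ext sum.cong[OF refl])
          apply (rule arg_cong2[where f="(*)"], rule refl, rule sym_eq[OF sG])
          using l W2 apply simp_all
          done
      qed
      show ?thesis unfolding e
        by (rule L3, rule fib_slice[OF sG fG lG])
    qed
  qed
  show ?thesis using symH fibH by blast
qed

end
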